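(* Let $(\Omega,\mathcal F,Q)$ be the classical Wiener space and let $f:\mathcal P_2(\mathbb R^d)\to\mathbb R$ be differentiable in the sense that its lift $\widetilde f(\eta):=f(Q_\eta)$ is Fréchet differentiable at every $\eta\in L^2(\Omega,\mathcal F,Q;\mathbb R^d)$, with $D\widetilde f(\eta)(\zeta)=E^Q[\partial_\mu f(Q_\eta,\eta)\cdot\zeta]$. Let $Q'$ be any probability measure on $(\Omega,\mathcal F)$. Then the lift w.r.t. $Q'$, $\widetilde f'(\eta'):=f(Q'_{\eta'})$, $\eta'\in L^2(\Omega,\mathcal F,Q';\mathbb R^d)$, is Fréchet differentiable on $L^2(\Omega,\mathcal F,Q';\mathbb R^d)$, and $D\widetilde f'(\eta')=\partial_\mu f(Q'_{\eta'},\eta')$, $Q'$-a.s., i.e. $D\widetilde f'(\eta')(\zeta')=E^{Q'}[\partial_\mu f(Q'_{\eta'},\eta')\cdot\zeta']$ for all $\zeta'\in L^2(Q';\mathbb R^d)$.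
   Context: Classical Wiener space: $\Omega=C_0([0,1])$ (a Radon space), $Q$ Wiener measure, $\mathcal F=\mathcal B(\Omega)\vee\mathcal N_Q$. $Q_\eta$ denotes the law of $\eta$ under $Q$; $\mathcal P_2(\mathbb R^d)$ the probability measures with finite second moment. $\partial_\mu f(\mu,\cdot)$ is the Borel function (depending on $\eta$ only through $\mu=Q_\eta$) representing the Fréchet derivative of the lift. *)

theory Defs
  imports "HOL-Probability.Probability"
begin

text \<open>C_0([0,1]) is realised isometrically inside the
bounded continuous functions on the real line: a path is extended by 0 on
negative times and constantly by its value at 1 for times beyond 1, so the
sup-norm of the extension equals the sup-norm on [0,1].\<close>

definition wiener_Omega :: "(real \<Rightarrow>\<^sub>C real) set" where
  "wiener_Omega = {\<omega>. apply_bcontfun \<omega> 0 = 0 \<and>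
      (\<forall>t. t \<le> 0 \<longrightarrow> apply_bcontfun \<omega> t = 0) \<and>
      (\<forall>t. t \<ge> 1 \<longrightarrow> apply_bcontfun \<omega> t = apply_bcontfun \<omega> 1)}"

definition wiener_borel :: "(real \<Rightarrow>\<^sub>C real) measure" where
  "wiener_borel = restrict_space borel wiener_Omega"

text \<open>Wiener measure on the Borel sets of Omega: the coordinate process has
independent Gaussian increments with variance t - s (and starts at 0, which
is built into Omega).\<close>
definition wiener_measure :: "(real \<Rightarrow>\<^sub>C real) measure \<Rightarrow> bool" where
  "wiener_measure W \<longleftrightarrow> prob_space W \<and> sets W = sets wiener_borel \<and>
     (\<forall>s t. 0 \<le> s \<longrightarrow> s < t \<longrightarrow> t \<le> 1 \<longrightarrow>
        distributed W lborel (\<lambda>\<omega>. apply_bcontfun \<omega> t - apply_bcontfun \<omega> s)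
          (normal_density 0 (sqrt (t - s)))) \<and>
     (\<forall>(ts :: nat \<Rightarrow> real) n. (\<forall>i<n. 0 \<le> ts i \<and> ts i < ts (Suc i)) \<and> ts n \<le> 1 \<longrightarrow>
        prob_space.indep_vars W (\<lambda>_. borel)
          (\<lambda>i \<omega>. apply_bcontfun \<omega> (ts (Suc i)) - apply_bcontfun \<omega> (ts i)) {..<n})"

text \<open>Square-integrable R^d-valued random variables on a measure space
(representatives of elements of L^2), and the L^2 norm.\<close>
definition L2 :: "'b measure \<Rightarrow> ('b \<Rightarrow> 'a::euclidean_space) set" where
  "L2 M = {\<eta> \<in> borel_measurable M. integrable M (\<lambda>\<omega>. (norm (\<eta> \<omega>))\<^sup>2)}"

definition L2norm :: "'b measure \<Rightarrow> ('b \<Rightarrow> 'a::euclidean_space) \<Rightarrow> real" where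
  "L2norm M \<zeta> = sqrt (\<integral>\<omega>. (norm (\<zeta> \<omega>))\<^sup>2 \<partial>M)"

definition law :: "'b measure \<Rightarrow> ('b \<Rightarrow> 'a::euclidean_space) \<Rightarrow> 'a measure" where
  "law M \<eta> = distr M borel \<eta>"

definition lift_frechet_at ::
  "'b measure \<Rightarrow> ('a::euclidean_space measure \<Rightarrow> real) \<Rightarrow> ('a measure \<Rightarrow> 'a \<Rightarrow> 'a)
    \<Rightarrow> ('b \<Rightarrow> 'a) \<Rightarrow> bool" where
  "lift_frechet_at M f df \<eta> \<longleftrightarrow>
     df (law M \<eta>) \<in> borel_measurable borel \<and>
     (\<lambda>\<omega>. df (law M \<eta>) (\<eta> \<omega>)) \<in> L2 M \<and>
     (\<forall>\<epsilon>>0. \<exists>\<delta>>0. \<forall>\<zeta>\<in>L2 M. L2norm M \<zeta> < \<delta> \<longrightarrow>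
        \<bar>f (law M (\<lambda>\<omega>. \<eta> \<omega> + \<zeta> \<omega>)) - f (law M \<eta>)
          - (\<integral>\<omega>. df (law M \<eta>) (\<eta> \<omega>) \<bullet> \<zeta> \<omega> \<partial>M)\<bar> \<le> \<epsilon> * L2norm M \<zeta>)"

end

theory Submission
  imports Defs "HOL-Probability.Probability"
begin

lemma L2_law_transfer:
  fixes \<eta> :: "'b \<Rightarrow> 'a::euclidean_space" and \<eta>' :: "'c \<Rightarrow> 'a"
  assumes \<eta>: "\<eta> \<in> borel_measurable M0" and \<eta>': "\<eta>' \<in> borel_measurable M'"
    and law: "distr M0 borel \<eta> = distr M' borel \<eta>'"
    and g: "(g :: 'a \<Rightarrow> 'd::{banach, second_countable_topology}) \<in> borel_measurable borel"
  shows "integrable M0 (\<lambda>\<omega>. g (\<eta> \<omega>)) \<longleftrightarrow> integrable M' (\<lambda>\<omega>. g (\<eta>' \<omega>))"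
    and "(\<integral>\<omega>. g (\<eta> \<omega>) \<partial>M0) = (\<integral>\<omega>. g (\<eta>' \<omega>) \<partial>M')"
proof -
  show "integrable M0 (\<lambda>\<omega>. g (\<eta> \<omega>)) \<longleftrightarrow> integrable M' (\<lambda>\<omega>. g (\<eta>' \<omega>))"
    using integrable_distr_eq[OF \<eta> g] integrable_distr_eq[OF \<eta>' g] law by simp
  show "(\<integral>\<omega>. g (\<eta> \<omega>) \<partial>M0) = (\<integral>\<omega>. g (\<eta>' \<omega>) \<partial>M')"
    using integral_distr[OF \<eta> g] integral_distr[OF \<eta>' g] law by simp
qed

lemma transfer_frechet:
  fixes M0 :: "'b measure" and M' :: "'c measure" and \<eta> :: "'b \<Rightarrow> 'a::euclidean_space"
  assumes \<eta>: "\<eta> \<in> borel_measurable M0" and \<eta>': "\<eta>' \<in> L2 M'"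
    and law: "law M0 \<eta> = law M' \<eta>'"
    and joint: "\<And>\<zeta>' :: 'c \<Rightarrow> 'a. \<zeta>' \<in> borel_measurable M' \<Longrightarrow> \<exists>\<zeta>::'b \<Rightarrow> 'a\<in>borel_measurable M0.
        distr M0 borel (\<lambda>\<omega>. (\<eta> \<omega>, \<zeta> \<omega>)) = distr M' borel (\<lambda>\<omega>. (\<eta>' \<omega>, \<zeta>' \<omega>))"
    and fr: "\<eta> \<in> L2 M0 \<Longrightarrow> lift_frechet_at M0 f df \<eta>"
  shows "\<eta> \<in> L2 M0" "lift_frechet_at M' f df \<eta>'"
proof -
  have \<eta>'m: "\<eta>' \<in> borel_measurable M'" using \<eta>' by (simp add: L2_def)
  have law': "distr M0 borel \<eta> = distr M' borel \<eta>'" using law by (simp add: law_def)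
  show L2: "\<eta> \<in> L2 M0"
    using \<eta>' L2_law_transfer(1)[OF \<eta> \<eta>'m law', of "\<lambda>x. (norm x)\<^sup>2"] \<eta> by (simp add: L2_def)
  note F = fr[OF L2]
  define D where "D = df (law M0 \<eta>)"
  have Dm: "D \<in> borel_measurable borel" using F by (simp add: lift_frechet_at_def D_def)
  have DL2: "(\<lambda>\<omega>. D (\<eta> \<omega>)) \<in> L2 M0" using F by (simp add: lift_frechet_at_def D_def)
  have DL2': "(\<lambda>\<omega>. D (\<eta>' \<omega>)) \<in> L2 M'"
    using DL2 L2_law_transfer(1)[OF \<eta> \<eta>'m law', of "\<lambda>x. (norm (D x))\<^sup>2"] Dm \<eta>'m
    by (simp add: L2_def)
  have key: "\<exists>\<zeta>\<in>L2 M0. L2norm M0 \<zeta> = L2norm M' \<zeta>' \<and>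
      law M0 (\<lambda>\<omega>. \<eta> \<omega> + \<zeta> \<omega>) = law M' (\<lambda>\<omega>. \<eta>' \<omega> + \<zeta>' \<omega>) \<and>
      (\<integral>\<omega>. D (\<eta> \<omega>) \<bullet> \<zeta> \<omega> \<partial>M0) = (\<integral>\<omega>. D (\<eta>' \<omega>) \<bullet> \<zeta>' \<omega> \<partial>M')"
    if \<zeta>': "\<zeta>' \<in> L2 M'" for \<zeta>' :: "'c \<Rightarrow> 'a"
  proof -
    have \<zeta>'m: "\<zeta>' \<in> borel_measurable M'" using \<zeta>' by (simp add: L2_def)
    obtain \<zeta> where \<zeta>m: "\<zeta> \<in> borel_measurable M0" and J:
      "distr M0 borel (\<lambda>\<omega>. (\<eta> \<omega>, \<zeta> \<omega>)) = distr M' borel (\<lambda>\<omega>. (\<eta>' \<omega>, \<zeta>' \<omega>))"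
      using joint[OF \<zeta>'m] by blast
    have pm: "(\<lambda>\<omega>. (\<eta> \<omega>, \<zeta> \<omega>)) \<in> borel_measurable M0"
      using measurable_Pair[OF \<eta> \<zeta>m] by (simp add: borel_prod)
    have pm': "(\<lambda>\<omega>. (\<eta>' \<omega>, \<zeta>' \<omega>)) \<in> borel_measurable M'"
      using measurable_Pair[OF \<eta>'m \<zeta>'m] by (simp add: borel_prod)
    note T = L2_law_transfer[OF pm pm' J]
    have m1: "(\<lambda>p::'a\<times>'a. (norm (snd p))\<^sup>2) \<in> borel_measurable borel" unfolding borel_prod[symmetric] by measurable
    have m2: "(\<lambda>p::'a\<times>'a. D (fst p) \<bullet> snd p) \<in> borel_measurable borel" using Dm unfolding borel_prod[symmetric] by measurable
    have m3: "(\<lambda>p::'a\<times>'a. fst p + snd p) \<in> borel_measurable borel" unfolding borel_prod[symmetric] by measurable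
    have "\<zeta> \<in> L2 M0" using \<zeta>' T(1)[OF m1] \<zeta>m by (simp add: L2_def)
    moreover have "L2norm M0 \<zeta> = L2norm M' \<zeta>'" using T(2)[OF m1] by (simp add: L2norm_def)
    moreover have "law M0 (\<lambda>\<omega>. \<eta> \<omega> + \<zeta> \<omega>) = law M' (\<lambda>\<omega>. \<eta>' \<omega> + \<zeta>' \<omega>)"
      using distr_distr[OF m3 pm] distr_distr[OF m3 pm'] J by (simp add: law_def comp_def)
    moreover have "(\<integral>\<omega>. D (\<eta> \<omega>) \<bullet> \<zeta> \<omega> \<partial>M0) = (\<integral>\<omega>. D (\<eta>' \<omega>) \<bullet> \<zeta>' \<omega> \<partial>M')"
      using T(2)[OF m2] by simp
    ultimately show ?thesis by blast
  qed
  show "lift_frechet_at M' f df \<eta>'"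
    unfolding lift_frechet_at_def
  proof (intro conjI allI impI)
    show "df (law M' \<eta>') \<in> borel_measurable borel" using Dm law by (simp add: D_def)
    show "(\<lambda>\<omega>. df (law M' \<eta>') (\<eta>' \<omega>)) \<in> L2 M'" using DL2' law by (simp add: D_def)
    fix \<epsilon> :: real assume "\<epsilon> > 0"
    then obtain \<delta> where "\<delta> > 0" and \<delta>: "\<And>\<zeta>. \<zeta>\<in>L2 M0 \<Longrightarrow> L2norm M0 \<zeta> < \<delta> \<Longrightarrow>
        \<bar>f (law M0 (\<lambda>\<omega>. \<eta> \<omega> + \<zeta> \<omega>)) - f (law M0 \<eta>)
          - (\<integral>\<omega>. D (\<eta> \<omega>) \<bullet> \<zeta> \<omega> \<partial>M0)\<bar> \<le> \<epsilon> * L2norm M0 \<zeta>"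
      using F unfolding lift_frechet_at_def D_def by blast
    show "\<exists>\<delta>>0. \<forall>\<zeta>\<in>L2 M'. L2norm M' \<zeta> < \<delta> \<longrightarrow>
        \<bar>f (law M' (\<lambda>\<omega>. \<eta>' \<omega> + \<zeta> \<omega>)) - f (law M' \<eta>')
          - (\<integral>\<omega>. df (law M' \<eta>') (\<eta>' \<omega>) \<bullet> \<zeta> \<omega> \<partial>M')\<bar> \<le> \<epsilon> * L2norm M' \<zeta>"
    proof (intro exI[of _ \<delta>] conjI ballI impI)
      fix \<zeta>' :: "'c \<Rightarrow> 'a" assume z: "\<zeta>' \<in> L2 M'" "L2norm M' \<zeta>' < \<delta>"
      obtain \<zeta> :: "'b \<Rightarrow> 'a" where "\<zeta>\<in>L2 M0" "L2norm M0 \<zeta> = L2norm M' \<zeta>'"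
        "law M0 (\<lambda>\<omega>. \<eta> \<omega> + \<zeta> \<omega>) = law M' (\<lambda>\<omega>. \<eta>' \<omega> + \<zeta>' \<omega>)"
        "(\<integral>\<omega>. D (\<eta> \<omega>) \<bullet> \<zeta> \<omega> \<partial>M0) = (\<integral>\<omega>. D (\<eta>' \<omega>) \<bullet> \<zeta>' \<omega> \<partial>M')"
        using key[OF z(1)] by blast
      with \<delta>[of \<zeta>] z law show "\<bar>f (law M' (\<lambda>\<omega>. \<eta>' \<omega> + \<zeta>' \<omega>)) - f (law M' \<eta>')
          - (\<integral>\<omega>. df (law M' \<eta>') (\<eta>' \<omega>) \<bullet> \<zeta>' \<omega> \<partial>M')\<bar> \<le> \<epsilon> * L2norm M' \<zeta>'"
        by (simp add: D_def)
    qed (rule \<open>\<delta> > 0\<close>)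
  qed
qed

definition bdig :: "nat \<Rightarrow> real \<Rightarrow> real" where
  "bdig k t = of_int \<lfloor>2^(Suc k) * t\<rfloor> - 2 * of_int \<lfloor>2^k * t\<rfloor>"

definition tdig :: "nat \<Rightarrow> real \<Rightarrow> real" where
  "tdig m y = of_int \<lfloor>3^(Suc m) * y\<rfloor> - 3 * of_int \<lfloor>3^m * y\<rfloor>"

lemma floor_double_bounds:
  fixes s :: real
  shows "2 * \<lfloor>s\<rfloor> \<le> \<lfloor>2 * s\<rfloor> \<and> \<lfloor>2 * s\<rfloor> \<le> 2 * \<lfloor>s\<rfloor> + 1"
proof -
  have a: "of_int \<lfloor>s\<rfloor> \<le> s" "s < of_int \<lfloor>s\<rfloor> + 1" by linarith+
  have "2 * \<lfloor>s\<rfloor> \<le> \<lfloor>2 * s\<rfloor>" using a by (simp add: le_floor_iff)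
  moreover have "\<lfloor>2 * s\<rfloor> < 2 * \<lfloor>s\<rfloor> + 2" using a by (simp add: floor_less_iff; linarith)
  ultimately show ?thesis by linarith
qed

lemma bdig_01: "bdig k t = 0 \<or> bdig k t = 1"
proof -
  have e: "2^(Suc k) * t = 2 * (2^k * t)" by simp
  have "\<lfloor>2 * (2 ^ k * t)\<rfloor> - 2 * \<lfloor>2 ^ k * t\<rfloor> = 0 \<or> \<lfloor>2 * (2 ^ k * t)\<rfloor> - 2 * \<lfloor>2 ^ k * t\<rfloor> = 1"
    using floor_double_bounds[of "2^k*t"] by linarith
  moreover have "bdig k t = of_int (\<lfloor>2 * (2 ^ k * t)\<rfloor> - 2 * \<lfloor>2 ^ k * t\<rfloor>)"
    unfolding bdig_def e by simp
  ultimately show ?thesis by auto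
qed

lemma bdig_partial: "(\<Sum>k<m. bdig k t / 2^(Suc k)) = of_int \<lfloor>2^m * t\<rfloor> / 2^m - of_int \<lfloor>t\<rfloor>"
proof (induction m)
  case 0 then show ?case by simp
next
  case (Suc m)
  have "(\<Sum>k<Suc m. bdig k t / 2^(Suc k)) = of_int \<lfloor>2^m * t\<rfloor> / 2^m - of_int \<lfloor>t\<rfloor> + bdig m t / 2^(Suc m)"
    using Suc by simp
  also have "\<dots> = of_int \<lfloor>2^Suc m * t\<rfloor> / 2^Suc m - of_int \<lfloor>t\<rfloor>"
    unfolding bdig_def by (simp add: field_simps)
  finally show ?case .
qed

lemma bdig_sums:
  assumes "0 \<le> t" "t < 1"
  shows "(\<lambda>k. bdig k t / 2^(Suc k)) sums t"
proof -
  have fl: "\<lfloor>t\<rfloor> = 0" using assms by (simp add: floor_eq_iff)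
  have "(\<lambda>m. of_int \<lfloor>2^m * t\<rfloor> / 2^m) \<longlonglongrightarrow> t"
  proof (rule tendsto_sandwich[of "\<lambda>m. t - 1/2^m" _ _ "\<lambda>m. t"])
    show "\<forall>\<^sub>F m in sequentially. t - 1 / 2 ^ m \<le> of_int \<lfloor>2 ^ m * t\<rfloor> / 2 ^ m"
    proof (intro always_eventually allI)
      fix m :: nat
      have "2^m * t - 1 \<le> of_int \<lfloor>2 ^ m * t\<rfloor>" by linarith
      then have "(2^m * t - 1) / 2^m \<le> of_int \<lfloor>2 ^ m * t\<rfloor> / 2^m" by (simp add: divide_right_mono)
      moreover have "(2^m * t - 1) / 2^m = t - 1 / (2::real)^m" by (simp add: field_simps)
      ultimately show "t - 1 / 2 ^ m \<le> of_int \<lfloor>2 ^ m * t\<rfloor> / 2 ^ m" by simp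
    qed
    show "\<forall>\<^sub>F m in sequentially. of_int \<lfloor>2 ^ m * t\<rfloor> / 2 ^ m \<le> t"
    proof (intro always_eventually allI)
      fix m :: nat
      have "of_int \<lfloor>2 ^ m * t\<rfloor> \<le> 2^m * t" by linarith
      then show "of_int \<lfloor>2 ^ m * t\<rfloor> / 2 ^ m \<le> t" by (simp add: field_simps)
    qed
    have "(\<lambda>m. t - (1/2) ^ m) \<longlonglongrightarrow> t - 0"
      by (intro tendsto_intros) simp
    then show "(\<lambda>m. t - 1 / 2 ^ m) \<longlonglongrightarrow> t" by (simp add: power_one_over)
  qed simp
  then show ?thesis unfolding sums_def bdig_partial fl by simp
qed

fun Pint :: "(nat \<Rightarrow> real) \<Rightarrow> nat \<Rightarrow> int" where
  "Pint a 0 = 0"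
| "Pint a (Suc m) = 3 * Pint a m + (if a m = 1 then 1 else 0)"

lemma tdig_decode:
  assumes a: "\<And>j. a j = 0 \<or> a j = 1"
  shows "tdig m (\<Sum>j. a j / 3^(Suc j)) = a m"
proof -
  let ?f = "\<lambda>j. a j / 3^(Suc j)"
  have ab: "\<bar>a j\<bar> \<le> 1" for j using a[of j] by auto
  have sg: "summable (\<lambda>j. (1/3::real)^(Suc j))" by (subst summable_Suc_iff) (simp add: summable_geometric)
  have sf: "summable ?f"
    by (rule summable_comparison_test[OF _ sg]) (auto simp: ab power_one_over divide_le_cancel intro!: exI[of _ 0] divide_right_mono)
  have Pr: "real_of_int (Pint a m) = 3^m * (\<Sum>j<m. ?f j)" for m
  proof (induction m)
    case (Suc m)
    have "real_of_int (Pint a (Suc m)) = 3 * (3^m * (\<Sum>j<m. ?f j)) + a m"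
      using Suc a[of m] by auto
    also have "\<dots> = 3^Suc m * (\<Sum>j<Suc m. ?f j)"
      by (simp add: field_simps)
    finally show ?case .
  qed simp
  have fl: "\<lfloor>3^m * (\<Sum>j. ?f j)\<rfloor> = Pint a m" for m
  proof -
    have split: "(\<Sum>j. ?f j) = (\<Sum>j. ?f (j + m)) + (\<Sum>j<m. ?f j)"
      using suminf_split_initial_segment[OF sf] by simp
    have sfm: "summable (\<lambda>j. ?f (j + m))" using summable_ignore_initial_segment[OF sf, of m] by simp
    let ?r = "3^m * (\<Sum>j. ?f (j + m))"
    have r0: "0 \<le> ?r"
      using a by (intro mult_nonneg_nonneg suminf_nonneg sfm) (auto, metis divide_nonneg_pos order.refl zero_less_numeral zero_less_power zero_less_one zero_le_one mult_pos_pos)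
    have "(\<Sum>j. ?f (j + m)) \<le> (\<Sum>j. (1/3)^(Suc j) / 3^m)"
    proof (rule suminf_le)
      show "?f (j + m) \<le> (1/3)^(Suc j) / 3^m" for j
        using a[of "j+m"] by (auto simp: power_add power_one_over field_simps)
      show "summable (\<lambda>j. (1/3::real)^(Suc j) / 3^m)" using sg by (rule summable_divide)
    qed (rule sfm)
    also have "\<dots> = (\<Sum>j. (1/3::real)^(Suc j)) / 3^m" by (rule suminf_divide[OF sg])
    also have "(\<Sum>j. (1/3::real)^(Suc j)) = 1/2"
      using suminf_mult[OF summable_geometric[of "1/3::real"], of "1/3"] suminf_geometric[of "1/3::real"] by simp
    finally have r1: "?r < 1" by (simp add: field_simps)
    have "3^m * (\<Sum>j. ?f j) = real_of_int (Pint a m) + ?r"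
      using Pr[of m] split by (simp add: field_simps)
    then show ?thesis using r0 r1 by (simp add: floor_eq_iff)
  qed
  show ?thesis unfolding tdig_def fl using a[of m] by auto
qed


lemma a1: "\<bar>t / (1 + \<bar>t\<bar>)\<bar> < (1::real)"
proof -
  have p: "0 < 1 + \<bar>t\<bar>" by simp
  have "\<bar>t / (1 + \<bar>t\<bar>)\<bar> = \<bar>t\<bar> / (1 + \<bar>t\<bar>)" using p by (simp add: abs_divide)
  also have "\<dots> < 1" using p by (simp add: divide_less_eq)
  finally show ?thesis .
qed
definition sq01 :: "real \<Rightarrow> real" where "sq01 t = 1/2 + t / (2 * (1 + \<bar>t\<bar>))"
definition unsq01 :: "real \<Rightarrow> real" where "unsq01 s = (2 * s - 1) / (1 - \<bar>2 * s - 1\<bar>)"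
lemma sq01_eq: "2 * sq01 t - 1 = t / (1 + \<bar>t\<bar>)" unfolding sq01_def by (simp add: field_simps)
lemma sq01_bounds: "0 \<le> sq01 t \<and> sq01 t < 1"
  using a1[of t] sq01_eq[of t] unfolding abs_less_iff by linarith
lemma unsq01_sq01: "unsq01 (sq01 t) = t"
proof -
  have p: "0 < 1 + \<bar>t\<bar>" by simp
  have "\<bar>t / (1 + \<bar>t\<bar>)\<bar> = \<bar>t\<bar> / (1 + \<bar>t\<bar>)" using p by (simp add: abs_divide)
  moreover have "1 - \<bar>t\<bar> / (1 + \<bar>t\<bar>) = 1 / (1 + \<bar>t\<bar>)" using p by (simp add: field_simps)
  ultimately show ?thesis unfolding unsq01_def sq01_eq using p by simp
qed
lemma borel_injection:
  "\<exists>(g::'a::euclidean_space \<Rightarrow> real) h. g \<in> borel_measurable borel \<and> h \<in> borel_measurable borel \<and> (\<forall>x. h (g x) = x)"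
proof -
  define n where "n = DIM('a)"
  have n0: "0 < n" unfolding n_def by simp
  obtain e where e: "bij_betw e {0..<n} (Basis::'a set)"
    using ex_bij_betw_nat_finite[of "Basis::'a set"] unfolding n_def by auto
  define a where "a x m = bdig (m div n) (sq01 (x \<bullet> e (m mod n)))" for x :: 'a and m
  define g where "g x = (\<Sum>m. a x m / 3^(Suc m))" for x
  define hi where "hi i y = (\<Sum>k. tdig (k*n+i) y / 2^(Suc k))" for i y
  define h where "h y = (\<Sum>i<n. unsq01 (hi i y) *\<^sub>R e i)" for y
  have "g \<in> borel_measurable borel" unfolding g_def a_def bdig_def sq01_def by measurable
  moreover have "h \<in> borel_measurable borel" unfolding h_def hi_def tdig_def unsq01_def by measurable
  moreover have "h (g x) = x" for x
  proof -
    have hi: "hi i (g x) = sq01 (x \<bullet> e i)" if i: "i < n" for i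
    proof -
      have "tdig (k*n+i) (g x) = bdig k (sq01 (x \<bullet> e i))" for k
      proof -
        have "tdig (k*n+i) (g x) = a x (k*n+i)"
          unfolding g_def by (rule tdig_decode) (simp add: a_def bdig_01)
        also have "\<dots> = bdig k (sq01 (x \<bullet> e i))" using i n0 by (simp add: a_def)
        finally show ?thesis .
      qed
      then show ?thesis unfolding hi_def using bdig_sums[of "sq01 (x \<bullet> e i)"] sq01_bounds
        by (simp add: sums_iff)
    qed
    have "h (g x) = (\<Sum>i<n. (x \<bullet> e i) *\<^sub>R e i)"
      unfolding h_def by (intro sum.cong refl) (simp add: hi unsq01_sq01)
    also have "\<dots> = (\<Sum>b\<in>Basis. (x \<bullet> b) *\<^sub>R b)"
      using sum.reindex_bij_betw[OF e, of "\<lambda>b. (x \<bullet> b) *\<^sub>R b"] by (simp add: atLeast0LessThan)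
    also have "\<dots> = x" by (rule euclidean_representation)
    finally show ?thesis .
  qed
  ultimately show ?thesis by blast
qed

lemma AE_le_from_set_integrals:
  fixes f g :: "'a \<Rightarrow> ennreal"
  assumes f[measurable]: "f \<in> borel_measurable M" and g[measurable]: "g \<in> borel_measurable M"
    and le: "\<And>A. A \<in> sets M \<Longrightarrow> (\<integral>\<^sup>+x. f x * indicator A x \<partial>M) \<le> (\<integral>\<^sup>+x. g x * indicator A x \<partial>M)"
    and fin: "integral\<^sup>N M f \<noteq> \<infinity>"
  shows "AE x in M. f x \<le> g x"
proof -
  define S where "S = {x\<in>space M. g x < f x}"
  have S[measurable]: "S \<in> sets M" unfolding S_def by measurable
  have finS: "(\<integral>\<^sup>+x. g x * indicator S x \<partial>M) \<noteq> \<infinity>"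
  proof -
    have "(\<integral>\<^sup>+x. g x * indicator S x \<partial>M) \<le> (\<integral>\<^sup>+x. f x * indicator S x \<partial>M)"
      by (intro nn_integral_mono) (auto simp: S_def indicator_def less_imp_le)
    also have "\<dots> \<le> integral\<^sup>N M f" by (intro nn_integral_mono) (auto simp: indicator_def)
    finally show ?thesis using fin by (auto simp: top_unique)
  qed
  have "(\<integral>\<^sup>+x. f x * indicator S x - g x * indicator S x \<partial>M)
      = (\<integral>\<^sup>+x. f x * indicator S x \<partial>M) - (\<integral>\<^sup>+x. g x * indicator S x \<partial>M)"
  proof (rule nn_integral_diff)
    show "AE x in M. g x * indicator S x \<le> f x * indicator S x"
      by (intro AE_I2) (auto simp: S_def indicator_def less_imp_le)
  qed (use finS in \<open>auto simp: infinity_ennreal_def\<close>)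
  also have "\<dots> = 0" using le[OF S] finS by (intro diff_eq_0_ennreal) (auto simp: less_top[symmetric] top_unique infinity_ennreal_def dest: order.trans)
  finally have "AE x in M. f x * indicator S x - g x * indicator S x = 0"
    by (subst nn_integral_0_iff_AE[symmetric]) auto
  with AE_space show ?thesis
  proof eventually_elim
    fix x assume x: "x \<in> space M" and eq: "f x * indicator S x - g x * indicator S x = 0"
    show "f x \<le> g x"
    proof (rule ccontr)
      assume "\<not> f x \<le> g x"
      then have "g x < f x" by (simp add: not_le)
      then have "x \<in> S" using x by (simp add: S_def)
      then have "f x - g x = 0" using eq by simp
      then show False using \<open>g x < f x\<close> by (auto simp add: diff_eq_0_iff_ennreal)
    qed
  qed
qed

definition uni :: "real measure" where "uni = uniform_measure lborel {0<..<1}"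

lemma sets_uni[simp, measurable_cong]: "sets uni = sets borel" unfolding uni_def by simp
lemma space_uni[simp]: "space uni = UNIV" unfolding uni_def by simp
lemma prob_space_uni: "prob_space uni"
  unfolding uni_def by (intro prob_space_uniform_measure) auto
lemma emeasure_uni: "A \<in> sets borel \<Longrightarrow> emeasure uni A = emeasure lborel ({0<..<1} \<inter> A)"
  unfolding uni_def by (simp add: divide_ennreal_def)

locale kernel_setup =
  fixes \<pi> :: "(real \<times> real) measure"
  assumes P: "prob_space \<pi>" and sp: "sets \<pi> = sets (borel \<Otimes>\<^sub>M borel)"
begin

lemma sp'[measurable_cong]: "sets \<pi> = sets (borel \<Otimes>\<^sub>M borel)" by (rule sp)
lemma space_\<pi>[simp]: "space \<pi> = UNIV" using sets_eq_imp_space_eq[OF sp] by (simp add: space_pair_measure)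

interpretation \<pi>: prob_space \<pi> by (rule P)

definition "\<mu> = distr \<pi> borel fst"
definition "\<nu> q = distr (density \<pi> (indicator (UNIV \<times> {..q}))) borel fst"
definition "R q = RN_deriv \<mu> (\<nu> q)"
definition "C x t = (INF q\<in>{q\<in>\<rat>. t < q}. R q x)"

lemma sets_\<mu>[simp, measurable_cong]: "sets \<mu> = sets borel" by (simp add: \<mu>_def)
lemma space_\<mu>[simp]: "space \<mu> = UNIV" by (simp add: \<mu>_def)
lemma prob_\<mu>: "prob_space \<mu>" unfolding \<mu>_def by (intro \<pi>.prob_space_distr) measurable

lemma em\<mu>: "A \<in> sets borel \<Longrightarrow> emeasure \<mu> A = emeasure \<pi> (A \<times> UNIV)"
  unfolding \<mu>_def by (subst emeasure_distr) (auto intro!: arg_cong2[where f=emeasure])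

lemma rect_sets[measurable]: "A \<in> sets borel \<Longrightarrow> B \<in> sets borel \<Longrightarrow> A \<times> B \<in> sets \<pi>"
  by (simp add: sp)

lemma em\<nu>: "A \<in> sets borel \<Longrightarrow> emeasure (\<nu> q) A = emeasure \<pi> (A \<times> {..q})"
proof -
  assume A[measurable]: "A \<in> sets borel"
  have "emeasure (\<nu> q) A = emeasure (density \<pi> (indicator (UNIV \<times> {..q}))) (fst -` A \<inter> space \<pi>)"
    unfolding \<nu>_def by (subst emeasure_distr) (auto simp: vimage_fst)
  also have "\<dots> = (\<integral>\<^sup>+x. indicator (UNIV \<times> {..q}) x * indicator (A \<times> UNIV) x \<partial>\<pi>)"
    by (subst emeasure_density) (auto intro!: arg_cong2[where f=emeasure] nn_integral_cong simp: indicator_def vimage_fst)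
  also have "\<dots> = (\<integral>\<^sup>+x. indicator (A \<times> {..q}) x \<partial>\<pi>)"
    by (intro nn_integral_cong) (auto simp: indicator_def)
  also have "\<dots> = emeasure \<pi> (A \<times> {..q})" by simp
  finally show ?thesis .
qed

lemma sets_\<nu>: "sets (\<nu> q) = sets \<mu>" by (simp add: \<nu>_def)

lemma ac: "absolutely_continuous \<mu> (\<nu> q)"
  unfolding absolutely_continuous_def
proof
  fix A assume "A \<in> null_sets \<mu>"
  then have A0: "A \<in> sets borel" "emeasure \<mu> A = 0" by auto
  then have A: "A \<in> sets borel" "emeasure \<pi> (A \<times> UNIV) = 0" by (auto simp: em\<mu>)
  have "emeasure \<pi> (A \<times> {..q}) \<le> emeasure \<pi> (A \<times> UNIV)"
    using A by (intro emeasure_mono) auto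
  then show "A \<in> null_sets (\<nu> q)" using A by (simp add: null_sets_def em\<nu> sets_\<nu>)
qed

lemma Rm[measurable]: "R q \<in> borel_measurable borel"
  unfolding R_def using borel_measurable_RN_deriv[of \<mu> "\<nu> q"] by simp

lemma RN: "A \<in> sets borel \<Longrightarrow> (\<integral>\<^sup>+x. R q x * indicator A x \<partial>\<mu>) = emeasure \<pi> (A \<times> {..q})"
proof -
  assume A: "A \<in> sets borel"
  interpret \<mu>: prob_space \<mu> by (rule prob_\<mu>)
  have "density \<mu> (R q) = \<nu> q" unfolding R_def
    by (rule \<mu>.density_RN_deriv[OF ac]) (simp add: sets_\<nu>)
  then have "emeasure (\<nu> q) A = (\<integral>\<^sup>+x. R q x * indicator A x \<partial>\<mu>)"
    using A by (subst (asm) eq_commute) (simp add: emeasure_density)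
  then show ?thesis using em\<nu>[OF A] by simp
qed

lemma R_le: "q \<le> r \<Longrightarrow> AE x in \<mu>. R q x \<le> R r x"
proof (rule AE_le_from_set_integrals)
  assume "q \<le> r"
  show "(\<integral>\<^sup>+x. R q x * indicator A x \<partial>\<mu>) \<le> (\<integral>\<^sup>+x. R r x * indicator A x \<partial>\<mu>)" if "A \<in> sets \<mu>" for A
    using that \<open>q \<le> r\<close> by (simp add: RN) (intro emeasure_mono, auto)
  show "integral\<^sup>N \<mu> (R q) \<noteq> \<infinity>"
    using RN[of UNIV q] \<pi>.emeasure_finite by simp
qed auto

lemma R_le1: "AE x in \<mu>. R q x \<le> 1"
proof (rule AE_le_from_set_integrals)
  show "(\<integral>\<^sup>+x. R q x * indicator A x \<partial>\<mu>) \<le> (\<integral>\<^sup>+x. 1 * indicator A x \<partial>\<mu>)" if "A \<in> sets \<mu>" for A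
    using that by (simp add: RN em\<mu>) (intro emeasure_mono, auto)
  show "integral\<^sup>N \<mu> (R q) \<noteq> \<infinity>"
    using RN[of UNIV q] \<pi>.emeasure_finite by simp
qed auto

lemma AE_R: "AE x in \<mu>. (\<forall>q\<in>\<rat>. \<forall>r\<in>\<rat>. q \<le> r \<longrightarrow> R q x \<le> R r x) \<and> (\<forall>q\<in>\<rat>. R q x \<le> 1)"
  using R_le R_le1 by (simp add: AE_ball_countable countable_rat)

lemma Cm[measurable]: "(\<lambda>x. C x t) \<in> borel_measurable borel"
  unfolding C_def by (rule borel_measurable_INF) (auto intro: countable_subset[OF _ countable_rat])

lemma C_mono: "t \<le> s \<Longrightarrow> C x t \<le> C x s"
  unfolding C_def by (rule INF_superset_mono) auto

lemma C_R: "q \<in> \<rat> \<Longrightarrow> t < q \<Longrightarrow> C x t \<le> R q x"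
  unfolding C_def by (rule INF_lower) auto


lemma exists_rat_seq: "\<exists>p. (\<forall>n. p n \<in> \<rat> \<and> t < p n \<and> p n < t + 1 / real (Suc n)) \<and> decseq p"
proof -
  have "\<forall>n. \<exists>r. r \<in> \<rat> \<and> t < r \<and> r < t + 1 / real (Suc n)"
    using Rats_dense_in_real by (metis less_add_same_cancel1 of_nat_0_less_iff zero_less_Suc zero_less_divide_1_iff)
  then obtain qs where qs: "\<And>n. qs n \<in> \<rat> \<and> t < qs n \<and> qs n < t + 1 / real (Suc n)" by metis
  define p where "p n = Min (qs ` {..n})" for n
  have pin: "p n \<in> qs ` {..n}" for n unfolding p_def by (intro Min_in) auto
  have "p n \<in> \<rat> \<and> t < p n \<and> p n < t + 1 / real (Suc n)" for n
  proof -
    obtain m where "m \<le> n" "p n = qs m" using pin[of n] by auto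
    moreover have "p n \<le> qs n" unfolding p_def by (intro Min_le) auto
    ultimately show ?thesis using qs[of m] qs[of n] by auto
  qed
  moreover have "decseq p"
    unfolding decseq_def p_def by (auto intro!: Min_antimono)
  ultimately show ?thesis by blast
qed

lemma C_int: "A \<in> sets borel \<Longrightarrow> (\<integral>\<^sup>+x. C x t * indicator A x \<partial>\<mu>) = emeasure \<pi> (A \<times> {..t})"
proof -
  assume A[measurable]: "A \<in> sets borel"
  obtain p where p: "\<And>n. p n \<in> \<rat>" "\<And>n. t < p n" "\<And>n. p n < t + 1 / real (Suc n)" and dp: "decseq p"
    using exists_rat_seq by blast
  have Ceq: "AE x in \<mu>. C x t * indicator A x = (INF n. R (p n) x * indicator A x)"
    using AE_R
  proof eventually_elim
    fix x assume x: "(\<forall>q\<in>\<rat>. \<forall>r\<in>\<rat>. q \<le> r \<longrightarrow> R q x \<le> R r x) \<and> (\<forall>q\<in>\<rat>. R q x \<le> 1)"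
    have "C x t = (INF n. R (p n) x)"
    proof (rule antisym)
      show "C x t \<le> (INF n. R (p n) x)" by (intro INF_greatest C_R p)
      show "(INF n. R (p n) x) \<le> C x t" unfolding C_def
      proof (intro INF_greatest)
        fix q assume q: "q \<in> {q \<in> \<rat>. t < q}"
        obtain n where n: "1 / real (Suc n) < q - t"
          using q reals_Archimedean[of "q - t"] by (auto simp: inverse_eq_divide)
        then have "p n \<le> q" using p(3)[of n] by linarith
        then have "R (p n) x \<le> R q x" using x q p(1) by auto
        then show "(INF n. R (p n) x) \<le> R q x" by (intro INF_lower2[of n]) auto
      qed
    qed
    then show "C x t * indicator A x = (INF n. R (p n) x * indicator A x)"
      by (simp add: indicator_def)
  qed
  have "(\<integral>\<^sup>+x. C x t * indicator A x \<partial>\<mu>) = (\<integral>\<^sup>+x. (INF n. R (p n) x * indicator A x) \<partial>\<mu>)"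
    by (rule nn_integral_cong_AE[OF Ceq])
  also have "\<dots> = (INF n. (\<integral>\<^sup>+x. R (p n) x * indicator A x \<partial>\<mu>))"
  proof (rule nn_integral_monotone_convergence_INF_AE')
    show "AE x in \<mu>. R (p (Suc i)) x * indicator A x \<le> R (p i) x * indicator A x" for i
      using AE_R
    proof eventually_elim
      fix x assume x: "(\<forall>q\<in>\<rat>. \<forall>r\<in>\<rat>. q \<le> r \<longrightarrow> R q x \<le> R r x) \<and> (\<forall>q\<in>\<rat>. R q x \<le> 1)"
      have "p (Suc i) \<le> p i" using dp by (simp add: decseq_Suc_iff)
      then show "R (p (Suc i)) x * indicator A x \<le> R (p i) x * indicator A x"
        using x p(1) by (auto simp: indicator_def)
    qed
    show "(\<integral>\<^sup>+x. R (p 0) x * indicator A x \<partial>\<mu>) < \<infinity>"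
      using RN[OF A, of "p 0"] by (simp add: less_top[symmetric] \<pi>.emeasure_finite)
  qed auto
  also have "\<dots> = (INF n. emeasure \<pi> (A \<times> {..p n}))" by (simp add: RN[OF A])
  also have "\<dots> = emeasure \<pi> (\<Inter>n. A \<times> {..p n})"
    by (rule INF_emeasure_decseq') (use dp in \<open>auto simp: decseq_def intro: order.trans\<close>)
  also have "(\<Inter>n. A \<times> {..p n}) = A \<times> {..t}"
  proof (intro equalityI subsetI)
    fix z assume z: "z \<in> (\<Inter>n. A \<times> {..p n})"
    have "snd z \<le> t"
    proof (rule ccontr)
      assume "\<not> snd z \<le> t"
      then obtain n where n: "1 / real (Suc n) < snd z - t"
        using reals_Archimedean[of "snd z - t"] by (auto simp: inverse_eq_divide)
      moreover have "snd z \<le> p n" using z by (cases z) auto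
      ultimately show False using p(3)[of n] by linarith
    qed
    then show "z \<in> A \<times> {..t}" using z by (cases z) auto
  next
    fix z assume z: "z \<in> A \<times> {..t}"
    show "z \<in> (\<Inter>n. A \<times> {..p n})"
    proof
      fix n
      have "snd z \<le> p n" using z p(2)[of n] by (cases z) auto
      then show "z \<in> A \<times> {..p n}" using z by (cases z) auto
    qed
  qed
  finally show ?thesis .
qed


definition "Gd = {x. (SUP n::nat. C x (real n)) = 1 \<and> (INF n::nat. C x (- real n)) = 0}"

lemma Gd_sets[measurable]: "Gd \<in> sets borel"
  unfolding Gd_def by measurable

lemma C_int_UNIV: "(\<integral>\<^sup>+x. C x t \<partial>\<mu>) = emeasure \<pi> (UNIV \<times> {..t})"
  using C_int[of UNIV t] by simp

lemma AE_Gd: "AE x in \<mu>. x \<in> Gd"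
proof -
  interpret \<mu>: prob_space \<mu> by (rule prob_\<mu>)
  have C1: "AE x in \<mu>. \<forall>t. C x t \<le> 1"
    using AE_R
  proof eventually_elim
    fix x assume x: "(\<forall>q\<in>\<rat>. \<forall>r\<in>\<rat>. q \<le> r \<longrightarrow> R q x \<le> R r x) \<and> (\<forall>q\<in>\<rat>. R q x \<le> 1)"
    show "\<forall>t. C x t \<le> 1"
    proof
      fix t :: real
      obtain q where "q \<in> \<rat>" "t < q" using Rats_dense_in_real[of t "t+1"] by auto
      then show "C x t \<le> 1" using C_R[of q t x] x by (auto intro: order.trans)
    qed
  qed
  have inc: "incseq (\<lambda>n x. C x (real n))"
    by (intro incseq_SucI le_funI C_mono) simp
  have "(\<integral>\<^sup>+x. (SUP n. C x (real n)) \<partial>\<mu>) = (SUP n. \<integral>\<^sup>+x. C x (real n) \<partial>\<mu>)"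
    by (rule nn_integral_monotone_convergence_SUP[OF inc]) auto
  also have "\<dots> = (SUP n. emeasure \<pi> (UNIV \<times> {..real n}))" by (simp add: C_int_UNIV)
  also have "\<dots> = emeasure \<pi> (\<Union>n. UNIV \<times> {..real n})"
    by (rule SUP_emeasure_incseq) (auto simp: incseq_def)
  also have "(\<Union>n. UNIV \<times> {..real n}) = (UNIV :: (real \<times> real) set)"
  proof -
    have "\<exists>n. b \<le> real n" for b :: real by (rule real_arch_simple)
    then show ?thesis by auto
  qed
  finally have intS: "(\<integral>\<^sup>+x. (SUP n. C x (real n)) \<partial>\<mu>) = 1" using \<pi>.emeasure_space_1 by simp
  have S1: "AE x in \<mu>. (SUP n. C x (real n)) = 1"
  proof -
    have le: "AE x in \<mu>. (SUP n. C x (real n)) \<le> 1"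
      using C1 by eventually_elim (auto intro: SUP_least)
    have "(\<integral>\<^sup>+x. 1 - (SUP n. C x (real n)) \<partial>\<mu>) = (\<integral>\<^sup>+x. 1 \<partial>\<mu>) - (\<integral>\<^sup>+x. (SUP n. C x (real n)) \<partial>\<mu>)"
      by (rule nn_integral_diff) (auto simp: intS le)
    also have "\<dots> = 0" using intS \<mu>.emeasure_space_1 by simp
    finally have "AE x in \<mu>. 1 - (SUP n. C x (real n)) = 0"
      by (subst nn_integral_0_iff_AE[symmetric]) auto
    with le show ?thesis
      by eventually_elim (auto simp: diff_eq_0_iff_ennreal)
  qed
  have "(\<integral>\<^sup>+x. (INF n. C x (- real n)) \<partial>\<mu>) = (INF n. \<integral>\<^sup>+x. C x (- real n) \<partial>\<mu>)"
  proof (rule nn_integral_monotone_convergence_INF_AE')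
    show "AE x in \<mu>. C x (- real (Suc i)) \<le> C x (- real i)" for i
      by (intro AE_I2 C_mono) simp
    show "(\<integral>\<^sup>+x. C x (- real 0) \<partial>\<mu>) < \<infinity>"
      by (simp add: C_int_UNIV less_top[symmetric] \<pi>.emeasure_finite)
  qed auto
  also have "\<dots> = (INF n. emeasure \<pi> (UNIV \<times> {..- real n}))" by (simp add: C_int_UNIV)
  also have "\<dots> = emeasure \<pi> (\<Inter>n. UNIV \<times> {..- real n})"
    by (rule INF_emeasure_decseq') (auto simp: decseq_def)
  also have "(\<Inter>n. UNIV \<times> {..- real n}) = ({} :: (real \<times> real) set)"
  proof (intro equalityI subsetI)
    fix z :: "real \<times> real" assume z: "z \<in> (\<Inter>n. UNIV \<times> {..- real n})"
    obtain n :: nat where n: "- snd z < real n" using reals_Archimedean2 by blast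
    have "snd z \<le> - real n" using z by auto
    with n show "z \<in> {}" by simp
  qed simp
  finally have "AE x in \<mu>. (INF n. C x (- real n)) = 0"
    by (subst nn_integral_0_iff_AE[symmetric]) auto
  with S1 show ?thesis by eventually_elim (simp add: Gd_def)
qed

definition "H x u = (if x \<in> Gd \<and> u \<in> {0<..<1} then Inf {t. ennreal u \<le> C x t} else 0)"

lemma C_le1_Gd: "x \<in> Gd \<Longrightarrow> C x t \<le> 1"
proof -
  assume x: "x \<in> Gd"
  obtain n :: nat where "t \<le> real n" using real_arch_simple by blast
  then have "C x t \<le> C x (real n)" by (rule C_mono)
  also have "\<dots> \<le> (SUP n. C x (real n))" by (rule SUP_upper) simp
  finally show ?thesis using x by (simp add: Gd_def)
qed

lemma PI:
  assumes x: "x \<in> Gd" and u: "0 < u" "u < 1"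
  shows "ennreal u \<le> C x t \<longleftrightarrow> H x u \<le> t"
proof -
  let ?S = "{t. ennreal u \<le> C x t}"
  have Hx: "H x u = Inf ?S" using x u by (simp add: H_def)
  have "ennreal u < (SUP n. C x (real n))" using x u by (simp add: Gd_def)
  then obtain n :: nat where n: "ennreal u < C x (real n)" by (auto simp: less_SUP_iff)
  then have ne: "?S \<noteq> {}" by (auto intro!: exI[of _ "real n"] less_imp_le)
  have "(INF n. C x (- real n)) < ennreal u" using x u by (simp add: Gd_def)
  then obtain m :: nat where m: "C x (- real m) < ennreal u" by (auto simp: INF_less_iff)
  have bdd: "bdd_below ?S"
  proof (rule bdd_belowI[of _ "- real m"])
    fix s assume "s \<in> ?S"
    then have "ennreal u \<le> C x s" by simp
    show "- real m \<le> s"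
    proof (rule ccontr)
      assume "\<not> - real m \<le> s"
      then have "C x s \<le> C x (- real m)" by (intro C_mono) simp
      with m \<open>ennreal u \<le> C x s\<close> show False by simp
    qed
  qed
  show ?thesis
  proof
    assume "ennreal u \<le> C x t"
    then show "H x u \<le> t" unfolding Hx by (intro cInf_lower bdd) simp
  next
    assume Ht: "H x u \<le> t"
    show "ennreal u \<le> C x t" unfolding C_def
    proof (intro INF_greatest)
      fix q assume q: "q \<in> {q \<in> \<rat>. t < q}"
      then have "Inf ?S < q" using Ht Hx by simp
      then obtain s where s: "s \<in> ?S" "s < q" using cInf_less_iff[OF ne bdd] by auto
      then have "ennreal u \<le> C x s" by simp
      also have "C x s \<le> R q x" using q s by (intro C_R) auto
      finally show "ennreal u \<le> R q x" .
    qed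
  qed
qed


lemma H_meas[measurable]: "(\<lambda>p. H (fst p) (snd p)) \<in> borel_measurable (borel \<Otimes>\<^sub>M borel)"
proof (subst borel_measurable_iff_le, intro allI)
  fix a :: real
  have "{w \<in> space (borel \<Otimes>\<^sub>M borel). H (fst w) (snd w) \<le> a} =
    {w \<in> space (borel \<Otimes>\<^sub>M borel). (fst w \<in> Gd \<and> 0 < snd w \<and> snd w < 1 \<and> ennreal (snd w) \<le> C (fst w) a)
       \<or> (\<not> (fst w \<in> Gd \<and> 0 < snd w \<and> snd w < 1) \<and> 0 \<le> a)}"
  proof -
    have "H x u \<le> a \<longleftrightarrow> (x \<in> Gd \<and> 0 < u \<and> u < 1 \<and> ennreal u \<le> C x a)
       \<or> (\<not> (x \<in> Gd \<and> 0 < u \<and> u < 1) \<and> 0 \<le> a)" for x u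
    proof (cases "x \<in> Gd \<and> 0 < u \<and> u < 1")
      case True then show ?thesis using PI[of x u a] by auto
    next
      case False then show ?thesis by (auto simp: H_def)
    qed
    then show ?thesis by auto
  qed
  also have "\<dots> \<in> sets (borel \<Otimes>\<^sub>M borel)" by measurable
  finally show "{w \<in> space (borel \<Otimes>\<^sub>M borel). H (fst w) (snd w) \<le> a} \<in> sets (borel \<Otimes>\<^sub>M borel)" .
qed

lemma H_slice_meas: "{u. H x u \<le> t} \<in> sets borel"
proof -
  have "(\<lambda>u. H x u) \<in> borel_measurable borel"
    using measurable_compose[OF measurable_Pair[OF measurable_const[of x] measurable_ident_sets[OF refl]] H_meas]
    by simp
  then show ?thesis by measurable
qed

lemma slice: "x \<in> Gd \<Longrightarrow> emeasure uni {u. H x u \<le> t} = C x t"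
proof -
  assume x: "x \<in> Gd"
  define c where "c = enn2real (C x t)"
  have "C x t < top" by (rule le_less_trans[OF C_le1_Gd[OF x]]) simp
  then have Cc: "C x t = ennreal c" unfolding c_def by simp
  have c01: "0 \<le> c" "c \<le> 1" unfolding c_def
    by (rule enn2real_nonneg, rule enn2real_leI) (use C_le1_Gd[OF x, of t] in auto)
  have "{0<..<1} \<inter> {u. H x u \<le> t} = {0<..<1} \<inter> {..c}"
  proof -
    have "u \<in> {0<..<1} \<inter> {u. H x u \<le> t} \<longleftrightarrow> u \<in> {0<..<1} \<inter> {..c}" for u
    proof (cases "0 < u \<and> u < 1")
      case True then show ?thesis using PI[OF x, of u t] Cc ennreal_le_iff[OF c01(1), of u] by auto
    qed auto
    then show ?thesis by blast
  qed
  then have "emeasure uni {u. H x u \<le> t} = emeasure lborel ({0<..<1} \<inter> {..c})"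
    by (simp add: emeasure_uni H_slice_meas)
  also have "\<dots> = ennreal c"
  proof (cases "c < 1")
    case True
    then have "{0<..<1} \<inter> {..c} = {0<..c}" by auto
    then show ?thesis using c01 by simp
  next
    case False
    then have "c = 1" using c01 by simp
    then have "{0<..<1} \<inter> {..c} = {0<..<1}" by auto
    then show ?thesis using \<open>c = 1\<close> by simp
  qed
  finally show ?thesis using Cc by simp
qed

lemma sets_borel2_gen:
  "sets (borel \<Otimes>\<^sub>M borel :: (real \<times> real) measure) = sigma_sets UNIV {A \<times> {..t} | A t. A \<in> sets borel}"
proof -
  have "sets (borel \<Otimes>\<^sub>M borel :: (real \<times> real) measure)
      = sets (sigma UNIV (sets borel) \<Otimes>\<^sub>M sigma UNIV (range (\<lambda>a::real. {..a})))"
  proof (rule sets_pair_measure_cong)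
    show "sets borel = sets (sigma UNIV (sets (borel::real measure)))"
      using sets.sigma_sets_eq[of "borel::real measure"] by simp
    show "sets borel = sets (sigma UNIV (range (\<lambda>a::real. {..a})))"
      by (subst borel_eq_atMost) simp
  qed
  also have "\<dots> = sets (sigma (UNIV \<times> UNIV) {a \<times> b | a b. a \<in> sets borel \<and> b \<in> range (\<lambda>a::real. {..a})})"
  proof (subst sigma_prod)
    show "\<exists>E\<subseteq>range (\<lambda>a::real. {..a}). countable E \<and> UNIV = \<Union> E"
    proof (intro exI conjI)
      show "range (\<lambda>n::nat. {..real n}) \<subseteq> range (\<lambda>a::real. {..a})" by auto
      show "UNIV = \<Union> (range (\<lambda>n::nat. {..real n}))"
        by (auto simp: real_arch_simple)
    qed auto
  qed (auto intro!: exI[of _ "{UNIV}"])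
  also have "{a \<times> b | a b. a \<in> sets borel \<and> b \<in> range (\<lambda>a::real. {..a})} = {A \<times> {..t} | A t. A \<in> sets borel}"
    by auto
  finally show ?thesis by simp
qed

lemma joint: "distr (\<mu> \<Otimes>\<^sub>M uni) (borel \<Otimes>\<^sub>M borel) (\<lambda>p. (fst p, H (fst p) (snd p))) = \<pi>"
proof -
  define E where "E = {A \<times> {..t} | (A::real set) (t::real). A \<in> sets borel}"
  show ?thesis
proof (rule measure_eqI_generator_eq[where \<Omega>=UNIV and E="E"
      and A="\<lambda>n. UNIV \<times> {..real n}"])
  interpret uni: prob_space uni by (rule prob_space_uni)
  have T[measurable]: "(\<lambda>p. (fst p, H (fst p) (snd p))) \<in> (\<mu> \<Otimes>\<^sub>M uni) \<rightarrow>\<^sub>M (borel \<Otimes>\<^sub>M borel)"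
    by measurable
  show "Int_stable E"
  proof (rule Int_stableI)
    fix a b assume "a \<in> E" "b \<in> E"
    then obtain A t B s where "a = A \<times> {..t}" "b = B \<times> {..s}" "A \<in> sets borel" "B \<in> sets borel" by (auto simp: E_def)
    then show "a \<inter> b \<in> E" unfolding E_def
      by (intro CollectI exI[of _ "A \<inter> B"] exI[of _ "min t s"]) auto
  qed
  show "E \<subseteq> Pow (UNIV :: (real \<times> real) set)" by auto
  show "sets (distr (\<mu> \<Otimes>\<^sub>M uni) (borel \<Otimes>\<^sub>M borel) (\<lambda>p. (fst p, H (fst p) (snd p))))
      = sigma_sets UNIV E"
    using sets_borel2_gen by (simp add: E_def)
  show "sets \<pi> = sigma_sets UNIV E"
    using sets_borel2_gen sp by (simp add: E_def)
  show "range (\<lambda>n. UNIV \<times> {..real n}) \<subseteq> E" by (auto simp: E_def)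
  show "(\<Union>n. UNIV \<times> {..real n}) = (UNIV :: (real \<times> real) set)"
    by (auto simp: real_arch_simple)
  show "emeasure (distr (\<mu> \<Otimes>\<^sub>M uni) (borel \<Otimes>\<^sub>M borel) (\<lambda>p. (fst p, H (fst p) (snd p)))) (UNIV \<times> {..real n}) \<noteq> \<infinity>" for n
  proof -
    interpret P: pair_prob_space \<mu> uni
      by (intro pair_prob_space.intro pair_sigma_finite.intro prob_\<mu> prob_space_uni
            prob_space_imp_sigma_finite)
    interpret D: prob_space "distr (\<mu> \<Otimes>\<^sub>M uni) (borel \<Otimes>\<^sub>M borel) (\<lambda>p. (fst p, H (fst p) (snd p)))"
      by (rule P.prob_space_distr[OF T])
    show ?thesis using D.emeasure_finite[of "UNIV \<times> {..real n}"] by simp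
  qed
  fix X assume "X \<in> E"
  then obtain A t where X: "X = A \<times> {..t}" and A[measurable]: "A \<in> sets borel" by (auto simp: E_def)
  have "emeasure (distr (\<mu> \<Otimes>\<^sub>M uni) (borel \<Otimes>\<^sub>M borel) (\<lambda>p. (fst p, H (fst p) (snd p)))) X
      = emeasure (\<mu> \<Otimes>\<^sub>M uni) {p. fst p \<in> A \<and> H (fst p) (snd p) \<le> t}"
    unfolding X by (subst emeasure_distr) (auto simp: space_pair_measure intro!: arg_cong2[where f=emeasure])
  also have "\<dots> = (\<integral>\<^sup>+x. emeasure uni (Pair x -` {p. fst p \<in> A \<and> H (fst p) (snd p) \<le> t}) \<partial>\<mu>)"
  proof (rule uni.emeasure_pair_measure_alt)
    have "{p. fst p \<in> A \<and> H (fst p) (snd p) \<le> t} = {p \<in> space (borel \<Otimes>\<^sub>M borel). fst p \<in> A \<and> H (fst p) (snd p) \<le> t}"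
      by (auto simp: space_pair_measure)
    also have "\<dots> \<in> sets (borel \<Otimes>\<^sub>M borel)" by measurable
    also have "sets (borel \<Otimes>\<^sub>M borel) = sets (\<mu> \<Otimes>\<^sub>M uni)" by (rule sets_pair_measure_cong) simp_all
    finally show "{p. fst p \<in> A \<and> H (fst p) (snd p) \<le> t} \<in> sets (\<mu> \<Otimes>\<^sub>M uni)" .
  qed
  also have "\<dots> = (\<integral>\<^sup>+x. C x t * indicator A x \<partial>\<mu>)"
  proof (rule nn_integral_cong_AE)
    show "AE x in \<mu>. emeasure uni (Pair x -` {p. fst p \<in> A \<and> H (fst p) (snd p) \<le> t}) = C x t * indicator A x"
      using AE_Gd by eventually_elim (auto simp: slice indicator_def)
  qed
  also have "\<dots> = emeasure \<pi> X" unfolding X by (rule C_int[OF A])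
  finally show "emeasure (distr (\<mu> \<Otimes>\<^sub>M uni) (borel \<Otimes>\<^sub>M borel) (\<lambda>p. (fst p, H (fst p) (snd p)))) X = emeasure \<pi> X" .
qed
qed

end

lemma real_distribution_uni: "real_distribution uni"
  unfolding real_distribution_def real_distribution_axioms_def using prob_space_uni by simp

lemma measure_uni: "A \<in> sets borel \<Longrightarrow> measure uni A = measure lborel ({0<..<1} \<inter> A)"
  by (simp add: measure_def emeasure_uni)

lemma cdf_uniform:
  assumes N: "real_distribution N" and na: "\<And>x. measure N {x} = 0"
  shows "distr N borel (cdf N) = uni"
proof (rule cdf_unique)
  interpret N: real_distribution N by (rule N)
  let ?F = "cdf N"
  have Fm[measurable]: "?F \<in> borel_measurable borel"
    by (intro borel_measurable_mono) (simp add: mono_def N.cdf_nondecreasing)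
  show "real_distribution (distr N borel ?F)" by simp
  show "real_distribution uni" by (rule real_distribution_uni)
  have cont: "\<And>x. continuous (at x) ?F" using na by (simp add: N.isCont_cdf)
  show "cdf (distr N borel ?F) = cdf uni"
  proof
    fix s :: real
    have FmN: "?F \<in> measurable N borel" using Fm by simp
    have "cdf (distr N borel ?F) s = measure (distr N borel ?F) {..s}" by (simp only: cdf_def)
    also have "\<dots> = measure N (?F -` {..s} \<inter> space N)" by (rule measure_distr[OF FmN]) simp
    finally have lhs: "cdf (distr N borel ?F) s = measure N {x. ?F x \<le> s}"
      by (simp add: vimage_def)
    have rhs: "cdf uni s = measure lborel ({0<..<1} \<inter> {..s})"
      by (simp add: cdf_def measure_uni)
    let ?S = "{x. ?F x \<le> s}"
    show "cdf (distr N borel ?F) s = cdf uni s"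
    proof (cases "s < 0")
      case True
      then have "?S = {}" using N.cdf_nonneg by (auto simp: not_le intro: less_le_trans)
      moreover have "{0<..<1} \<inter> {..s} = ({}::real set)" using True by auto
      ultimately show ?thesis using lhs rhs by simp
    next
      case s0: False
      show ?thesis
      proof (cases "s < 1")
        case False
        then have "?S = UNIV" using N.cdf_bounded_prob by (auto simp: not_less intro: order.trans)
        moreover have "{0<..<1} \<inter> {..s} = {0<..<(1::real)}" using False by auto
        ultimately show ?thesis using lhs rhs N.prob_space by simp
      next
        case s1: True
        have uni_s: "measure lborel ({0<..<1} \<inter> {..s}) = s"
        proof -
          have "{0<..<1} \<inter> {..s} = {0<..s}" using s1 by auto
          then show ?thesis using s0 by simp
        qed
        have cl: "closed ?S"
          using continuous_closed_vimage[OF closed_atMost[of s] cont] by (simp add: vimage_def)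
        have "\<forall>\<^sub>F x in at_top. s < ?F x"
          using order_tendstoD(1)[OF N.cdf_lim_at_top_prob s1] .
        then obtain b where b: "s < ?F b" by (auto simp: eventually_at_top_linorder)
        have bdd: "bdd_above ?S"
        proof (rule bdd_aboveI[of _ b])
          fix x assume "x \<in> ?S"
          then show "x \<le> b" using b N.cdf_nondecreasing[of b x] by (cases "x \<le> b") auto
        qed
        show ?thesis
        proof (cases "?S = {}")
          case True
          have "s = 0"
          proof (rule ccontr)
            assume "s \<noteq> 0"
            then have "0 < s" using s0 by simp
            then have "\<forall>\<^sub>F x in at_bot. ?F x < s"
              using order_tendstoD(2)[OF N.cdf_lim_at_bot] by blast
            then obtain c where "?F c < s" by (auto simp: eventually_at_bot_linorder)
            then show False using True by (auto dest: less_imp_le)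
          qed
          then show ?thesis using lhs rhs uni_s True by simp
        next
          case False
          define a where "a = Sup ?S"
          have aS: "a \<in> ?S" unfolding a_def by (rule closed_contains_Sup[OF False bdd cl])
          have Seq: "?S = {..a}"
          proof (intro equalityI subsetI)
            fix x assume "x \<in> ?S" then show "x \<in> {..a}" unfolding a_def using bdd by (auto intro: cSup_upper)
          next
            fix x assume "x \<in> {..a}"
            then show "x \<in> ?S" using aS N.cdf_nondecreasing[of x a] by auto
          qed
          have Fa: "?F a = s"
          proof (rule ccontr)
            assume "?F a \<noteq> s"
            then have "?F a < s" using aS by simp
            have op: "open (?F -` {..<s})" by (rule continuous_open_vimage[OF open_lessThan cont])
            then obtain e where e: "e > 0" "ball a e \<subseteq> ?F -` {..<s}"
              using op \<open>?F a < s\<close> unfolding open_contains_ball by (meson lessThan_iff vimageI)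
            have "a + e/2 \<in> ball a e" using e by (simp add: dist_real_def)
            then have "a + e/2 \<in> ?S" using e by auto
            then have "a + e/2 \<le> a" using Seq by auto
            then show False using e by simp
          qed
          have "measure N {x. ?F x \<le> s} = ?F a" using Seq by (simp add: cdf_def)
          then show ?thesis using lhs rhs uni_s Fa by simp
        qed
      qed
    qed
  qed
qed

lemma quantile_uni:
  assumes M: "real_distribution M"
  shows "\<exists>I. I \<in> borel_measurable borel \<and> distr uni borel I = M"
proof -
  interpret cdf_distribution M using M by (simp add: cdf_distribution_def)
  define I' where "I' u = indicator {0<..<1::real} u * I u" for u
  have I'm: "I' \<in> borel_measurable borel"
    using measurable_CI unfolding I'_def
    by (subst (asm) borel_measurable_restrict_space_iff) auto
  have "distr uni borel I' = M"
  proof (rule measure_eqI)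
    show "sets (distr uni borel I') = sets M" by simp
    fix A assume A: "A \<in> sets (distr uni borel I')"
    then have Ab[measurable]: "A \<in> sets borel" by simp
    have "emeasure (distr uni borel I') A = emeasure lborel ({0<..<1} \<inter> I' -` A)"
      using I'm A by (simp add: emeasure_distr emeasure_uni measurable_sets_borel)
    also have "{0<..<1} \<inter> I' -` A = I -` A \<inter> {0<..<1}" by (auto simp: I'_def)
    also have "emeasure lborel (I -` A \<inter> {0<..<1}) = emeasure (distr (restrict_space lborel {0<..<1::real}) borel I) A"
      using measurable_CI
      by (subst emeasure_distr) (auto simp: emeasure_restrict_space space_restrict_space
          sets_restrict_space_iff intro!: measurable_sets_borel[of I])
    also have "\<dots> = emeasure M A" by (simp add: distr_I_eq_M)
    finally show "emeasure (distr uni borel I') A = emeasure M A" .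
  qed
  with I'm show ?thesis by blast
qed

lemma no_atoms_density_lborel:
  assumes f: "f \<in> borel_measurable borel"
  shows "measure (density lborel f) {x::real} = 0"
proof -
  have AE0: "AE y in lborel. f y * indicator {x} y = 0"
    using AE_lborel_singleton[of x] by eventually_elim (auto simp: indicator_def)
  have "emeasure (density lborel f) {x} = (\<integral>\<^sup>+y. f y * indicator {x} y \<partial>lborel)"
    using f by (subst emeasure_density) auto
  also have "\<dots> = (\<integral>\<^sup>+y. 0 \<partial>lborel)"
    using nn_integral_cong_AE[OF AE0] by simp
  finally show ?thesis by (simp add: measure_def)
qed

lemma wiener_uniforms:
  fixes Q0 :: "(real \<Rightarrow>\<^sub>C real) measure"
  assumes W: "wiener_measure Q0"
  shows "\<exists>U1 U2. U1 \<in> borel_measurable Q0 \<and> U2 \<in> borel_measurable Q0 \<and>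
      distr Q0 (borel \<Otimes>\<^sub>M borel) (\<lambda>\<omega>. (U1 \<omega>, U2 \<omega>)) = uni \<Otimes>\<^sub>M uni"
proof -
  have P: "prob_space Q0" and D: "\<And>s t. 0 \<le> s \<Longrightarrow> s < t \<Longrightarrow> t \<le> 1 \<Longrightarrow>
        distributed Q0 lborel (\<lambda>\<omega>. apply_bcontfun \<omega> t - apply_bcontfun \<omega> s)
          (normal_density 0 (sqrt (t - s)))"
    and I: "\<And>(ts :: nat \<Rightarrow> real) n. (\<forall>i<n. 0 \<le> ts i \<and> ts i < ts (Suc i)) \<and> ts n \<le> 1 \<Longrightarrow>
        prob_space.indep_vars Q0 (\<lambda>_. borel)
          (\<lambda>i \<omega>. apply_bcontfun \<omega> (ts (Suc i)) - apply_bcontfun \<omega> (ts i)) {..<n}"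
    using W unfolding wiener_measure_def by auto
  interpret Q: prob_space Q0 by (rule P)
  define ts where "ts = (\<lambda>i::nat. real i / 2)"
  define Y where "Y i \<omega> = apply_bcontfun \<omega> (ts (Suc i)) - apply_bcontfun \<omega> (ts i)" for i and \<omega> :: "real \<Rightarrow>\<^sub>C real"
  have ind: "Q.indep_vars (\<lambda>_. borel) Y {..<2}"
    unfolding Y_def by (rule I) (auto simp: ts_def less_Suc_eq numeral_2_eq_2)
  have Y0: "Y 0 = (\<lambda>\<omega>. apply_bcontfun \<omega> (1/2) - apply_bcontfun \<omega> 0)"
    by (simp add: Y_def ts_def fun_eq_iff)
  have Y1: "Y 1 = (\<lambda>\<omega>. apply_bcontfun \<omega> 1 - apply_bcontfun \<omega> (1/2))"
    by (simp add: Y_def ts_def fun_eq_iff)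
  define Nd where "Nd = density lborel (normal_density 0 (sqrt (1/2)))"
  have d0: "distributed Q0 lborel (Y 0) (normal_density 0 (sqrt (1/2)))"
    using D[of 0 "1/2"] unfolding Y0 by simp
  have d1: "distributed Q0 lborel (Y 1) (normal_density 0 (sqrt (1/2)))"
    using D[of "1/2" 1] unfolding Y1 by simp
  have Ym: "Y i \<in> borel_measurable Q0" if "i \<in> {0, 1}" for i
    using that distributed_measurable[OF d0] distributed_measurable[OF d1]
    by (auto simp: measurable_cong_sets[OF refl sets_lborel])
  have dY: "distr Q0 borel (Y i) = Nd" if "i \<in> {0, 1}" for i
  proof -
    have "distr Q0 borel (Y i) = distr Q0 lborel (Y i)" by (rule distr_cong) auto
    then show ?thesis using that distributed_distr_eq_density[OF d0] distributed_distr_eq_density[OF d1]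
      by (auto simp: Nd_def)
  qed
  have iv: "Q.indep_var borel (Y 0) borel (Y 1)"
  proof -
    have r: "Q.indep_var (PiM {0} (\<lambda>_. borel)) (\<lambda>\<omega>. restrict (\<lambda>i. Y i \<omega>) {0})
        (PiM {1} (\<lambda>_. borel)) (\<lambda>\<omega>. restrict (\<lambda>i. Y i \<omega>) {1})"
      by (rule Q.indep_var_restrict[OF ind]) auto
    have "Q.indep_var borel ((\<lambda>f. f 0) \<circ> (\<lambda>\<omega>. restrict (\<lambda>i. Y i \<omega>) {0}))
        borel ((\<lambda>f. f 1) \<circ> (\<lambda>\<omega>. restrict (\<lambda>i. Y i \<omega>) {1}))"
      by (rule Q.indep_var_compose[OF r]) (auto intro: measurable_component_singleton)
    then show ?thesis by (simp add: comp_def)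
  qed
  have joint: "distr Q0 (borel \<Otimes>\<^sub>M borel) (\<lambda>\<omega>. (Y 0 \<omega>, Y 1 \<omega>)) = Nd \<Otimes>\<^sub>M Nd"
    using iv unfolding Q.indep_var_distribution_eq using dY by simp
  have Nd_rd: "real_distribution Nd"
  proof -
    have "prob_space (distr Q0 borel (Y 0))" by (rule Q.prob_space_distr) (rule Ym, simp)
    then show ?thesis using dY[of 0] unfolding real_distribution_def real_distribution_axioms_def
      by (simp add: Nd_def)
  qed
  have na: "\<And>x. measure Nd {x} = 0"
    unfolding Nd_def by (rule no_atoms_density_lborel) simp
  define F where "F = cdf Nd"
  have Fm[measurable]: "F \<in> borel_measurable borel"
    unfolding F_def by (intro borel_measurable_mono) (simp add: mono_def finite_borel_measure.cdf_nondecreasing[OF real_distribution.finite_borel_measure_M[OF Nd_rd]])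
  have dF: "distr Nd borel F = uni" unfolding F_def by (rule cdf_uniform[OF Nd_rd na])
  have pm: "(\<lambda>\<omega>. (Y 0 \<omega>, Y 1 \<omega>)) \<in> Q0 \<rightarrow>\<^sub>M borel \<Otimes>\<^sub>M borel"
    using Ym by (intro measurable_Pair) auto
  have Fpm: "(\<lambda>p. (F (fst p), F (snd p))) \<in> borel \<Otimes>\<^sub>M borel \<rightarrow>\<^sub>M borel \<Otimes>\<^sub>M borel" by measurable
  have "distr Q0 (borel \<Otimes>\<^sub>M borel) (\<lambda>\<omega>. (F (Y 0 \<omega>), F (Y 1 \<omega>)))
      = distr (distr Q0 (borel \<Otimes>\<^sub>M borel) (\<lambda>\<omega>. (Y 0 \<omega>, Y 1 \<omega>))) (borel \<Otimes>\<^sub>M borel) (\<lambda>p. (F (fst p), F (snd p)))"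
    by (subst distr_distr[OF Fpm pm]) (simp add: comp_def)
  also have "\<dots> = distr (Nd \<Otimes>\<^sub>M Nd) (borel \<Otimes>\<^sub>M borel) (\<lambda>(x, y). (F x, F y))"
    unfolding joint by (simp add: case_prod_beta')
  also have "\<dots> = distr Nd borel F \<Otimes>\<^sub>M distr Nd borel F"
  proof (rule pair_measure_distr[symmetric])
    have sN: "sets Nd = sets borel" by (simp add: Nd_def)
    show "F \<in> Nd \<rightarrow>\<^sub>M borel" using Fm by (simp add: measurable_cong_sets[OF sN refl])
    then show "F \<in> Nd \<rightarrow>\<^sub>M borel" .
    show "sigma_finite_measure (distr Nd borel F)"
      using dF prob_space_uni by (simp add: prob_space_imp_sigma_finite)
  qed
  also have "\<dots> = uni \<Otimes>\<^sub>M uni" by (simp add: dF)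
  finally show ?thesis using Ym by (intro exI[of _ "\<lambda>\<omega>. F (Y 0 \<omega>)"] exI[of _ "\<lambda>\<omega>. F (Y 1 \<omega>)"]) auto
qed

lemma rich:
  fixes Q0 :: "(real \<Rightarrow>\<^sub>C real) measure" and \<eta>' :: "'b \<Rightarrow> 'a::euclidean_space"
  assumes W: "wiener_measure Q0" and P': "prob_space Q'" and \<eta>'m[measurable]: "\<eta>' \<in> borel_measurable Q'"
  shows "\<exists>\<eta> \<in> borel_measurable (completion Q0). distr (completion Q0) borel \<eta> = distr Q' borel \<eta>' \<and>
    (\<forall>\<zeta>'::'b \<Rightarrow> 'a. \<zeta>' \<in> borel_measurable Q' \<longrightarrow> (\<exists>\<zeta> \<in> borel_measurable (completion Q0).
       distr (completion Q0) (borel \<Otimes>\<^sub>M borel) (\<lambda>\<omega>. (\<eta> \<omega>, \<zeta> \<omega>)) = distr Q' (borel \<Otimes>\<^sub>M borel) (\<lambda>\<omega>. (\<eta>' \<omega>, \<zeta>' \<omega>))))"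
proof -
  interpret Q': prob_space Q' by (rule P')
  interpret uni: prob_space uni by (rule prob_space_uni)
  obtain g :: "'a \<Rightarrow> real" and h where gm[measurable]: "g \<in> borel_measurable borel"
    and hm[measurable]: "h \<in> borel_measurable borel" and hg: "\<And>x. h (g x) = x"
    using borel_injection by blast
  obtain U1 U2 where U1m[measurable]: "U1 \<in> borel_measurable Q0" and U2m[measurable]: "U2 \<in> borel_measurable Q0"
    and JU: "distr Q0 (borel \<Otimes>\<^sub>M borel) (\<lambda>\<omega>. (U1 \<omega>, U2 \<omega>)) = uni \<Otimes>\<^sub>M uni"
    using wiener_uniforms[OF W] by blast
  define \<mu>t where "\<mu>t = distr Q' borel (\<lambda>\<omega>. g (\<eta>' \<omega>))"
  have rd: "real_distribution \<mu>t" unfolding \<mu>t_def by simp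
  obtain I where Im[measurable]: "I \<in> borel_measurable borel" and dI: "distr uni borel I = \<mu>t"
    using quantile_uni[OF rd] by blast
  have sets_\<mu>t[simp, measurable_cong]: "sets \<mu>t = sets borel" by (simp add: \<mu>t_def)
  define K where "K = distr (uni \<Otimes>\<^sub>M uni) (borel \<Otimes>\<^sub>M borel) (\<lambda>p. (I (fst p), snd p))"
  have K: "K = \<mu>t \<Otimes>\<^sub>M uni"
  proof -
    have "distr uni borel I \<Otimes>\<^sub>M distr uni borel (\<lambda>x. x) = distr (uni \<Otimes>\<^sub>M uni) (borel \<Otimes>\<^sub>M borel) (\<lambda>(x, y). (I x, y))"
      by (rule pair_measure_distr) (auto simp: distr_id2 prob_space_imp_sigma_finite prob_space_uni)
    then show ?thesis unfolding K_def dI by (simp add: distr_id2 case_prod_beta')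
  qed
  have sets_K[measurable_cong]: "sets K = sets (borel \<Otimes>\<^sub>M borel)" unfolding K_def by simp
  have UK: "distr Q0 L (\<lambda>\<omega>. F (I (U1 \<omega>)) (U2 \<omega>)) = distr K L (\<lambda>p. F (fst p) (snd p))"
    if [measurable]: "(\<lambda>p. F (fst p) (snd p)) \<in> borel \<Otimes>\<^sub>M borel \<rightarrow>\<^sub>M L" for F L
  proof -
    have "distr K L (\<lambda>p. F (fst p) (snd p)) = distr (distr Q0 (borel \<Otimes>\<^sub>M borel) (\<lambda>\<omega>. (U1 \<omega>, U2 \<omega>))) L
        ((\<lambda>p. F (fst p) (snd p)) \<circ> (\<lambda>p. (I (fst p), snd p)))"
    proof -
      have Ip: "(\<lambda>p. (I (fst p), snd p)) \<in> borel \<Otimes>\<^sub>M borel \<rightarrow>\<^sub>M borel \<Otimes>\<^sub>M borel" by measurable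
      have c: "(\<lambda>p. F (fst p) (snd p)) \<circ> (\<lambda>p. (I (fst p), snd p)) \<in> borel \<Otimes>\<^sub>M borel \<rightarrow>\<^sub>M L"
        using measurable_comp[OF Ip that] .
      have s: "sets (uni \<Otimes>\<^sub>M uni) = sets (borel \<Otimes>\<^sub>M borel)" by (rule sets_pair_measure_cong) simp_all
      show ?thesis unfolding K_def JU
        by (rule distr_distr) (use that Ip in \<open>auto simp: measurable_cong_sets[OF s refl]\<close>)
    qed
    also have "\<dots> = distr Q0 L (\<lambda>\<omega>. F (I (U1 \<omega>)) (U2 \<omega>))"
    proof -
      have Ip: "(\<lambda>p. (I (fst p), snd p)) \<in> borel \<Otimes>\<^sub>M borel \<rightarrow>\<^sub>M borel \<Otimes>\<^sub>M borel" by measurable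
      have c: "(\<lambda>p. F (fst p) (snd p)) \<circ> (\<lambda>p. (I (fst p), snd p)) \<in> borel \<Otimes>\<^sub>M borel \<rightarrow>\<^sub>M L"
        using measurable_comp[OF Ip that] .
      have U: "(\<lambda>\<omega>. (U1 \<omega>, U2 \<omega>)) \<in> Q0 \<rightarrow>\<^sub>M borel \<Otimes>\<^sub>M borel" by measurable
      show ?thesis by (subst distr_distr[OF c U]) (simp add: comp_def)
    qed
    finally show ?thesis ..
  qed
  define \<eta> where "\<eta> \<omega> = h (I (U1 \<omega>))" for \<omega>
  have \<eta>m: "\<eta> \<in> borel_measurable (completion Q0)"
    unfolding \<eta>_def by (intro measurable_completion) measurable
  have law: "distr (completion Q0) borel \<eta> = distr Q' borel \<eta>'"
  proof -
    have "distr (completion Q0) borel \<eta> = distr Q0 borel \<eta>"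
      unfolding \<eta>_def by (rule distr_completion) measurable
    also have "\<dots> = distr K borel (\<lambda>p. h (fst p))"
      unfolding \<eta>_def using UK[of "\<lambda>x y. h x" borel] by simp
    also have "\<dots> = distr (distr K borel fst) borel h"
      by (subst distr_distr) (auto simp: comp_def)
    also have "distr K borel fst = \<mu>t"
      unfolding K using uni.distr_pair_fst[of \<mu>t] by (simp add: distr_cong[OF refl sets_\<mu>t[symmetric]])
    also have "distr \<mu>t borel h = distr Q' borel (h \<circ> (\<lambda>\<omega>. g (\<eta>' \<omega>)))"
      unfolding \<mu>t_def by (rule distr_distr) auto
    finally show ?thesis by (simp add: comp_def hg)
  qed
  show ?thesis
  proof (rule bexI[of _ \<eta>], intro conjI allI impI)
    fix \<zeta>' :: "'b \<Rightarrow> 'a" assume \<zeta>'m[measurable]: "\<zeta>' \<in> borel_measurable Q'"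
    define \<pi> where "\<pi> = distr Q' (borel \<Otimes>\<^sub>M borel) (\<lambda>\<omega>. (g (\<eta>' \<omega>), g (\<zeta>' \<omega>)))"
    have gg[measurable]: "(\<lambda>\<omega>. (g (\<eta>' \<omega>), g (\<zeta>' \<omega>))) \<in> Q' \<rightarrow>\<^sub>M borel \<Otimes>\<^sub>M borel" by measurable
    have \<pi>_prob: "prob_space \<pi>" unfolding \<pi>_def by (rule Q'.prob_space_distr[OF gg])
    have \<pi>_sets: "sets \<pi> = sets (borel \<Otimes>\<^sub>M borel)" unfolding \<pi>_def by simp
    interpret ks: kernel_setup \<pi> by (rule kernel_setup.intro[OF \<pi>_prob \<pi>_sets])
    have fm: "fst \<in> borel \<Otimes>\<^sub>M borel \<rightarrow>\<^sub>M (borel :: real measure)" by measurable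
    have \<mu>\<pi>: "ks.\<mu> = \<mu>t"
    proof -
      have "ks.\<mu> = distr \<pi> borel fst" by (rule ks.\<mu>_def)
      also have "\<dots> = \<mu>t" unfolding \<pi>_def \<mu>t_def by (subst distr_distr[OF fm gg]) (simp add: comp_def)
      finally show ?thesis .
    qed
    define \<zeta> where "\<zeta> \<omega> = h (ks.H (I (U1 \<omega>)) (U2 \<omega>))" for \<omega>
    have Hm[measurable]: "(\<lambda>p. ks.H (fst p) (snd p)) \<in> borel_measurable (borel \<Otimes>\<^sub>M borel)"
      by (rule ks.H_meas)
    have IU: "(\<lambda>\<omega>. (I (U1 \<omega>), U2 \<omega>)) \<in> Q0 \<rightarrow>\<^sub>M borel \<Otimes>\<^sub>M borel" by measurable
    have Hm2[measurable]: "(\<lambda>\<omega>. ks.H (I (U1 \<omega>)) (U2 \<omega>)) \<in> borel_measurable Q0"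
      using measurable_compose[OF IU Hm] by simp
    show "\<exists>\<zeta>\<in>borel_measurable (completion Q0).
       distr (completion Q0) (borel \<Otimes>\<^sub>M borel) (\<lambda>\<omega>. (\<eta> \<omega>, \<zeta> \<omega>)) = distr Q' (borel \<Otimes>\<^sub>M borel) (\<lambda>\<omega>. (\<eta>' \<omega>, \<zeta>' \<omega>))"
    proof (rule bexI[of _ \<zeta>])
      show "\<zeta> \<in> borel_measurable (completion Q0)"
        unfolding \<zeta>_def by (intro measurable_completion) measurable
      have "distr (completion Q0) (borel \<Otimes>\<^sub>M borel) (\<lambda>\<omega>. (\<eta> \<omega>, \<zeta> \<omega>)) = distr Q0 (borel \<Otimes>\<^sub>M borel) (\<lambda>\<omega>. (\<eta> \<omega>, \<zeta> \<omega>))"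
        unfolding \<eta>_def \<zeta>_def by (rule distr_completion) measurable
      also have "\<dots> = distr K (borel \<Otimes>\<^sub>M borel) (\<lambda>p. (h (fst p), h (ks.H (fst p) (snd p))))"
        unfolding \<eta>_def \<zeta>_def using UK[of "\<lambda>x y. (h x, h (ks.H x y))" "borel \<Otimes>\<^sub>M borel"] by simp
      also have "\<dots> = distr (distr K (borel \<Otimes>\<^sub>M borel) (\<lambda>p. (fst p, ks.H (fst p) (snd p)))) (borel \<Otimes>\<^sub>M borel)
          (\<lambda>q. (h (fst q), h (snd q)))"
        by (subst distr_distr) (auto simp: comp_def)
      also have "distr K (borel \<Otimes>\<^sub>M borel) (\<lambda>p. (fst p, ks.H (fst p) (snd p))) = \<pi>"
        unfolding K \<mu>\<pi>[symmetric] by (rule ks.joint)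
      also have "distr \<pi> (borel \<Otimes>\<^sub>M borel) (\<lambda>q. (h (fst q), h (snd q))) = distr Q' (borel \<Otimes>\<^sub>M borel) (\<lambda>\<omega>. (\<eta>' \<omega>, \<zeta>' \<omega>))"
        unfolding \<pi>_def by (subst distr_distr) (auto simp: comp_def hg)
      finally show "distr (completion Q0) (borel \<Otimes>\<^sub>M borel) (\<lambda>\<omega>. (\<eta> \<omega>, \<zeta> \<omega>)) = distr Q' (borel \<Otimes>\<^sub>M borel) (\<lambda>\<omega>. (\<eta>' \<omega>, \<zeta>' \<omega>))" .
    qed
  qed (use \<eta>m law in auto)
qed

theorem lemmaA1:
  fixes Q0 Q' :: "(real \<Rightarrow>\<^sub>C real) measure"
    and f :: "'a::euclidean_space measure \<Rightarrow> real"
    and df :: "'a measure \<Rightarrow> 'a \<Rightarrow> 'a"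
  assumes "wiener_measure Q0"
    and "\<And>\<eta>. \<eta> \<in> L2 (completion Q0) \<Longrightarrow> lift_frechet_at (completion Q0) f df \<eta>"
    and "prob_space Q'"
    and "sets Q' = sets (completion Q0)"
  shows "\<forall>\<eta>'\<in>L2 Q'. lift_frechet_at Q' f df \<eta>'"
proof
  fix \<eta>' :: "_ \<Rightarrow> 'a" assume \<eta>': "\<eta>' \<in> L2 Q'"
  then have \<eta>'m: "\<eta>' \<in> borel_measurable Q'" by (simp add: L2_def)
  obtain \<eta> where \<eta>m: "\<eta> \<in> borel_measurable (completion Q0)"
    and law: "distr (completion Q0) borel \<eta> = distr Q' borel \<eta>'"
    and J: "\<And>\<zeta>'::_ \<Rightarrow> 'a. \<zeta>' \<in> borel_measurable Q' \<Longrightarrow> \<exists>\<zeta> \<in> borel_measurable (completion Q0).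
       distr (completion Q0) (borel \<Otimes>\<^sub>M borel) (\<lambda>\<omega>. (\<eta> \<omega>, \<zeta> \<omega>)) = distr Q' (borel \<Otimes>\<^sub>M borel) (\<lambda>\<omega>. (\<eta>' \<omega>, \<zeta>' \<omega>))"
    using rich[OF assms(1) assms(3) \<eta>'m] by blast
  show "lift_frechet_at Q' f df \<eta>'"
  proof (rule transfer_frechet(2)[OF \<eta>m \<eta>'])
    show "law (completion Q0) \<eta> = law Q' \<eta>'" using law by (simp add: law_def)
    show "\<exists>\<zeta>\<in>borel_measurable (completion Q0). distr (completion Q0) borel (\<lambda>\<omega>. (\<eta> \<omega>, \<zeta> \<omega>)) = distr Q' borel (\<lambda>\<omega>. (\<eta>' \<omega>, \<zeta>' \<omega>))"
      if "\<zeta>' \<in> borel_measurable Q'" for \<zeta>' :: "_ \<Rightarrow> 'a"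
      using J[OF that] by (simp add: borel_prod)
    show "\<eta> \<in> L2 (completion Q0) \<Longrightarrow> lift_frechet_at (completion Q0) f df \<eta>" by (rule assms(2))
  qed
qed

end
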